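(* Let $0<q<1$ and let $f,h$ satisfy $0<h\le f^q$. Then there exists a non-increasing continuous function $g:(0,1]\to\mathbb{R}^+$ such that $\int_0^1 g(u)\,du=f$, $\int_0^1 g^q(u)\,du=h$, and $$\frac1t\int_0^t g(u)\,du=\omega_q\Big(\frac{f^q}{h}\Big)^{1/q}g(t)\quad\text{for all }t\in(0,1].$$
   Context: Here $\omega_q(z)=[H_q^{-1}(z)]^q$ for $z\ge1$, where $H_q(z)=(1-q)z^q+qz^{q-1}$ on $[1,\infty)$ (a strictly increasing bijection onto $[1,\infty)$). *)

theory Defs
  imports "HOL-Analysis.Analysis"
begin

definition H :: "real \<Rightarrow> real \<Rightarrow> real" where
  "H q z = (1 - q) * z powr q + q * z powr (q - 1)"

definition omega :: "real \<Rightarrow> real \<Rightarrow> real" where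
  "omega q z = (THE y. 1 \<le> y \<and> H q y = z) powr q"

end

theory Submission
  imports Defs
begin

lemma hi0:
  assumes "a > (-1::real)" "c \<ge> 0"
  shows "((\<lambda>x. x powr a) has_integral (c powr (a+1) / (a+1))) {0<..c}"
proof -
  have "((\<lambda>x. x powr a) has_integral (c powr (a+1) / (a+1))) {0..c}"
    using has_integral_powr_from_0[OF assms] .
  moreover have "((\<lambda>x. x powr a) has_integral (c powr (a+1) / (a+1))) {0..c} \<longleftrightarrow>
     ((\<lambda>x. x powr a) has_integral (c powr (a+1) / (a+1))) {0<..c}"
    by (rule has_integral_spike_set_eq; rule negligible_subset[of "{0}"]) auto
  ultimately show ?thesis by simp
qed

lemma H_mono:
  assumes "0 < q" "q < 1" "1 \<le> x" "x < y"
  shows "H q x < H q y"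
proof -
  have "H q x < H q y"
  proof (rule DERIV_pos_imp_increasing_open[OF assms(4)])
    fix t assume t: "x < t" "t < y"
    hence t0: "t > 0" "t > 1" using assms by auto
    have "DERIV (H q) t :> (1 - q) * (q * t powr (q - 1)) + q * ((q - 1) * t powr (q - 1 - 1))"
      unfolding H_def using t0
      by (auto intro!: derivative_eq_intros)
    moreover have "(1 - q) * (q * t powr (q - 1)) + q * ((q - 1) * t powr (q - 1 - 1))
        = q * (1 - q) * t powr (q - 1 - 1) * (t - 1)"
    proof -
      have "t powr (q - 1 - 1) * t powr 1 = t powr ((q - 1 - 1) + 1)"
        by (rule powr_add[symmetric])
      hence "t powr (q - 1) = t powr (q - 1 - 1) * t"
        using t0 by simp
      thus ?thesis by (simp add: algebra_simps)
    qed
    moreover have "q * (1 - q) * t powr (q - 1 - 1) * (t - 1) > 0"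
      using assms t0 by simp
    ultimately show "\<exists>d. DERIV (H q) t :> d \<and> d > 0" by metis
  next
    show "continuous_on {x..y} (H q)"
      unfolding H_def using assms by (auto intro!: continuous_intros)
  qed
  thus ?thesis .
qed

lemma H_1: "H q 1 = 1"
  by (simp add: H_def)

lemma H_ge: assumes "q < 1" "0 < z" "0 \<le> q" shows "H q z \<ge> (1 - q) * z powr q"
  using assms unfolding H_def by simp

theorem lemma4p1:
  fixes q f h :: real
  assumes "0 < q" "q < 1" "0 < f" "0 < h" "h \<le> f powr q"
  shows "\<exists>g :: real \<Rightarrow> real.
           (\<forall>u\<in>{0<..1}. 0 < g u)
         \<and> (\<forall>u\<in>{0<..1}. \<forall>v\<in>{0<..1}. u \<le> v \<longrightarrow> g v \<le> g u)
         \<and> continuous_on {0<..1} g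
         \<and> (g has_integral f) {0<..1}
         \<and> ((\<lambda>u. g u powr q) has_integral h) {0<..1}
         \<and> (\<forall>t\<in>{0<..1}. (1 / t) * integral {0<..t} g
               = (omega q (f powr q / h)) powr (1 / q) * g t)"
proof -
  define c where "c = f powr q / h"
  have c1: "c \<ge> 1" using assms unfolding c_def by simp
  define M where "M = max 1 ((c / (1 - q)) powr (1 / q))"
  have M1: "M \<ge> 1" unfolding M_def by simp
  have "(1 - q) * M powr q \<ge> c"
  proof -
    have "M powr q \<ge> ((c / (1 - q)) powr (1 / q)) powr q"
      unfolding M_def using assms c1 by (intro powr_mono2) auto
    also have "((c / (1 - q)) powr (1 / q)) powr q = c / (1 - q)"
      using assms c1 by (simp add: powr_powr)
    finally show ?thesis using assms by (simp add: field_simps)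
  qed
  hence HM: "H q M \<ge> c" using H_ge[of q M] assms M1 by linarith
  have "\<exists>x\<ge>1. x \<le> M \<and> H q x = c"
  proof (rule IVT)
    show "H q 1 \<le> c" using c1 by (simp add: H_1)
    show "c \<le> H q M" by (rule HM)
    show "1 \<le> M" by (rule M1)
    show "\<forall>x. 1 \<le> x \<and> x \<le> M \<longrightarrow> isCont (H q) x"
      unfolding H_def by (auto intro!: continuous_intros)
  qed
  then obtain z where z: "1 \<le> z" "H q z = c" by blast
  have uniq: "y = z" if "1 \<le> y" "H q y = c" for y
  proof (rule ccontr)
    assume "y \<noteq> z"
    hence "y < z \<or> z < y" by linarith
    thus False
    proof
      assume "y < z" thus False using H_mono[OF assms(1,2), of y z] that z by simp
    next
      assume "z < y" thus False using H_mono[OF assms(1,2), of z y] that z by simp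
    qed
  qed
  have theZ: "(THE y. 1 \<le> y \<and> H q y = c) = z"
    using z uniq by (intro the_equality) blast+
  have z0: "z > 0" using z by simp
  have om: "(omega q (f powr q / h)) powr (1 / q) = z"
    unfolding omega_def c_def[symmetric] theZ using z0 assms by (simp add: powr_powr)
  define e where "e = 1 / z - 1"
  define A where "A = f / z"
  have e1: "e > -1" "e \<le> 0" using z unfolding e_def by (auto simp: field_simps)
  have A0: "A > 0" using assms z0 unfolding A_def by simp
  define g where "g = (\<lambda>u. A * u powr e)"
  have intg: "integral {0<..t} g = A * z * t powr (1 / z)" if "t \<ge> 0" for t
  proof -
    have "(g has_integral A * (t powr (e + 1) / (e + 1))) {0<..t}"
      unfolding g_def by (rule has_integral_mult_right[OF hi0[OF e1(1) that]])
    moreover have "A * (t powr (e + 1) / (e + 1)) = A * z * t powr (1 / z)"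
      unfolding e_def using z0 by simp
    ultimately show ?thesis by (simp add: integral_unique)
  qed
  show ?thesis
  proof (intro exI[of _ g] conjI ballI impI)
    fix u assume "u \<in> {0<..1::real}"
    thus "0 < g u" unfolding g_def using A0 by simp
  next
    fix u v assume "u \<in> {0<..1::real}" "v \<in> {0<..1::real}" "u \<le> v"
    thus "g v \<le> g u" unfolding g_def using A0 e1
      by (intro mult_left_mono powr_mono2') auto
  next
    show "continuous_on {0<..1} g"
      unfolding g_def by (intro continuous_intros) auto
  next
    have "(g has_integral A * (1 powr (e + 1) / (e + 1))) {0<..1}"
      unfolding g_def by (rule has_integral_mult_right[OF hi0[OF e1(1)]]) simp
    moreover have "A * (1 powr (e + 1) / (e + 1)) = f"
      unfolding e_def A_def using z0 by simp
    ultimately show "(g has_integral f) {0<..1}" by simp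
  next
    have eq: "\<forall>u\<in>{0<..1::real}. g u powr q = A powr q * u powr (e * q)"
      unfolding g_def using A0 by (auto simp: powr_mult powr_powr)
    have eq1: "e * q > -1" using e1 assms
      using mult_nonpos_nonpos[of e "q - 1"] by (simp add: algebra_simps)
    have "((\<lambda>u. A powr q * u powr (e * q)) has_integral A powr q * (1 powr (e * q + 1) / (e * q + 1))) {0<..1}"
      by (rule has_integral_mult_right[OF hi0[OF eq1]]) simp
    moreover have "A powr q * (1 powr (e * q + 1) / (e * q + 1)) = h"
    proof -
      have Hp: "H q z \<noteq> 0" using z(2) c1 by simp
      have hz: "h = f powr q / H q z" using z(2) assms Hp unfolding c_def
        by (simp add: field_simps)
      have zq: "z powr (q - 1) = z powr q / z" using z0 by (simp add: powr_diff)
      have Hz: "H q z = z powr q * (e * q + 1)"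
        unfolding H_def e_def zq using z0 by (simp add: field_simps)
      have "A powr q = f powr q / z powr q" unfolding A_def using assms z0
        by (simp add: powr_divide)
      thus ?thesis using hz Hz by simp
    qed
    ultimately show "((\<lambda>u. g u powr q) has_integral h) {0<..1}"
      using has_integral_cong[of "{0<..1}" "\<lambda>u. g u powr q" "\<lambda>u. A powr q * u powr (e * q)" h] eq
      by simp
  next
    fix t :: real assume t: "t \<in> {0<..1}"
    have "(1 / t) * integral {0<..t} g = A * z * (t powr (1 / z) / t)"
      using intg[of t] t by simp
    also have "t powr (1 / z) / t = t powr e"
      unfolding e_def using t by (simp add: powr_diff)
    finally show "(1 / t) * integral {0<..t} g = (omega q (f powr q / h)) powr (1 / q) * g t"
      unfolding om g_def by simp
  qed
qed

end
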